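(* Consider the C2L model described in the context, and fix a time step $t$ and an earlier time step $k<t$. Work at the population level (infinite sample size). Assume the probability densities of $s_k$ and of every latent confounder $u_j$ are twice differentiable and strictly positive on $(-\infty,\infty)$. If $s_k$ is a valid instrumental variable relative to the causal relation $s_t\to a_t$, then $\{s_t, a_t \,\|\, s_k\}$ satisfies the AB Criterion.
   Context: C2L (Confounded Causal Imitation Learning) model: real-valued states $s_t$ and actions $a_t$ are generated by the structural equations $s_t = P(s_{t-1}, a_{t-1}) + e_{s_t}$, $\quad a_t = \pi(s_t) + h(u_t, u_{t-1}, \dots, u_{t-\tau}) + e_{a_t}$, where $P$ is the transition function, $\pi$ is the (unknown) policy, $h$ is a deterministic function, $\tau\ge 1$ is an unknown integer, the $u_j$ are unobserved latent confounders (each $u_j$ thus affects the actions $a_j, a_{j+1},\dots,a_{j+\tau}$, and affects later states through these actions and $P$), and the noise terms $e_{s_t}, e_{a_t}$ are mutually independent and independent of all confounders. Only states and actions are observed. Valid IV: a candidate $s_k$ is a valid instrumental variable relative to $s_t\to a_t$ if (A1, relevance) $s_k$ is statistically associated with the treatment $s_t$; (A2, exclusion restriction) $s_k$ has no directed causal path to $a_t$ other than through $s_t$; (A3, exogeneity) $s_k$ is independent of the latent confounders affecting $a_t$ (i.e., of $u_t,\dots,u_{t-\tau}$). AB Criterion: define the auxiliary residual $\mathcal{R}_{s_t,a_t\|s_k} := a_t - l(s_t)$, where the function $l\neq 0$ is chosen so that $\mathbb{E}[\mathcal{R}_{s_t,a_t\|s_k}\mid s_k]=0$. Then $\{s_t,a_t\|s_k\}$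 satisfies the AB Criterion if and only if $\mathcal{R}_{s_t,a_t\|s_k}$ is statistically independent of $s_k$. *)

theory Defs
  imports "HOL-Probability.Probability"
begin

datatype node = S nat | A nat | U int

fun c2l_edge :: "nat \<Rightarrow> node \<Rightarrow> node \<Rightarrow> bool" where
  "c2l_edge \<tau> (S i) (S j) = (j = Suc i)"
| "c2l_edge \<tau> (A i) (S j) = (j = Suc i)"
| "c2l_edge \<tau> (S i) (A j) = (i = j)"
| "c2l_edge \<tau> (U i) (A j) = (i \<le> int j \<and> int j \<le> i + int \<tau>)"
| "c2l_edge \<tau> _ _ = False"

definition path_avoiding :: "nat \<Rightarrow> node \<Rightarrow> node \<Rightarrow> node \<Rightarrow> bool" where
  "path_avoiding \<tau> z x y \<longleftrightarrow>
     (\<lambda>p q. c2l_edge \<tau> p q \<and> p \<noteq> z \<and> q \<noteq> z)\<^sup>+\<^sup>+ x y"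

definition twice_differentiable :: "(real \<Rightarrow> real) \<Rightarrow> bool" where
  "twice_differentiable f \<longleftrightarrow>
     (\<exists>f'. \<forall>x. (f has_real_derivative f' x) (at x) \<and> f' differentiable (at x))"

definition smooth_pos_density :: "'a measure \<Rightarrow> ('a \<Rightarrow> real) \<Rightarrow> bool" where
  "smooth_pos_density M X \<longleftrightarrow>
     (\<exists>f. distributed M lborel X (\<lambda>x. ennreal (f x)) \<and> (\<forall>x. f x > 0) \<and> twice_differentiable f)"

text \<open>The confounders affecting a_t: the block (u_t, u_{t-1}, ..., u_{t-tau}), as a random vector
  indexed by the lag i = 0..tau (component i is u_{t-i}).\<close>
definition conf_block :: "(int \<Rightarrow> 'a \<Rightarrow> real) \<Rightarrow> nat \<Rightarrow> nat \<Rightarrow> 'a \<Rightarrow> nat \<Rightarrow> real" where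
  "conf_block u \<tau> t = (\<lambda>\<omega>. \<lambda>i\<in>{..\<tau>}. u (int t - int i) \<omega>)"

definition conf_space :: "nat \<Rightarrow> (nat \<Rightarrow> real) measure" where
  "conf_space \<tau> = PiM {..\<tau>} (\<lambda>_. borel)"

definition indep_rv :: "'a measure \<Rightarrow> 'b measure \<Rightarrow> ('a \<Rightarrow> 'b) \<Rightarrow> 'c measure \<Rightarrow> ('a \<Rightarrow> 'c) \<Rightarrow> bool" where
  "indep_rv M Ma X Mb Y \<longleftrightarrow>
     X \<in> measurable M Ma \<and> Y \<in> measurable M Mb \<and>
     prob_space.indep_set M (sets (vimage_algebra (space M) X Ma)) (sets (vimage_algebra (space M) Y Mb))"

text \<open>Valid instrumental variable s_k relative to s_t -> a_t (conditions A1, A2, A3).\<close>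
definition valid_IV ::
  "'a measure \<Rightarrow> (nat \<Rightarrow> 'a \<Rightarrow> real) \<Rightarrow> (int \<Rightarrow> 'a \<Rightarrow> real) \<Rightarrow> nat \<Rightarrow> nat \<Rightarrow> nat \<Rightarrow> bool" where
  "valid_IV M s u \<tau> k t \<longleftrightarrow>
     \<not> prob_space.indep_var M borel (s k) borel (s t)
   \<and> \<not> path_avoiding \<tau> (S t) (S k) (A t)
   \<and> indep_rv M borel (s k) (conf_space \<tau>) (conf_block u \<tau> t)"

definition AB_criterion :: "'a measure \<Rightarrow> ('a \<Rightarrow> real) \<Rightarrow> ('a \<Rightarrow> real) \<Rightarrow> ('a \<Rightarrow> real) \<Rightarrow> bool" where
  "AB_criterion M st act sk \<longleftrightarrow>
     (\<exists>l :: real \<Rightarrow> real. l \<in> borel_measurable borel \<and> l \<noteq> (\<lambda>_. 0)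
        \<and> integrable M (\<lambda>\<omega>. act \<omega> - l (st \<omega>))
        \<and> (AE \<omega> in M. real_cond_exp M (vimage_algebra (space M) sk borel)
                          (\<lambda>\<omega>. act \<omega> - l (st \<omega>)) \<omega> = 0)
        \<and> prob_space.indep_var M borel sk borel (\<lambda>\<omega>. act \<omega> - l (st \<omega>)))"

end

theory Submission
  imports Defs
begin


lemma (in prob_space) indep_rv_alt:
  "indep_rv M Ma X Mb Y \<longleftrightarrow> X \<in> measurable M Ma \<and> Y \<in> measurable M Mb \<and>
    indep_set (sigma_sets (space M) {X -` A \<inter> space M | A. A \<in> sets Ma})
              (sigma_sets (space M) {Y -` A \<inter> space M | A. A \<in> sets Mb})"
  unfolding indep_rv_def sets_vimage_algebra by simp

lemma (in prob_space) indep_rv_var: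
  "indep_rv M Ma X Mb Y \<longleftrightarrow> indep_var Ma X Mb Y"
  unfolding indep_rv_alt indep_var_eq by auto

lemma (in prob_space) indep_rv_sym:
  assumes "indep_rv M Sm X Tm Y" shows "indep_rv M Tm Y Sm X"
  using assms unfolding indep_rv_alt indep_sets2_eq
proof (intro conjI ballI; (elim conjE)?)
  fix a b assume "\<forall>a\<in>sigma_sets (space M) {X -` A \<inter> space M |A. A \<in> sets Sm}.
       \<forall>b\<in>sigma_sets (space M) {Y -` A \<inter> space M |A. A \<in> sets Tm}. prob (a \<inter> b) = prob a * prob b"
    and "a \<in> sigma_sets (space M) {Y -` A \<inter> space M |A. A \<in> sets Tm}"
    "b \<in> sigma_sets (space M) {X -` A \<inter> space M |A. A \<in> sets Sm}"
  then have "prob (b \<inter> a) = prob b * prob a" by blast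
  then show "prob (a \<inter> b) = prob a * prob b" by (metis Int_commute mult.commute)
qed auto

lemma (in prob_space) indep_rvD:
  assumes "indep_rv M Sm X Tm Y" "a \<in> sets Sm" "b \<in> sets Tm"
  shows "prob (X -` a \<inter> Y -` b \<inter> space M) = prob (X -` a \<inter> space M) * prob (Y -` b \<inter> space M)"
proof -
  have "X -` a \<inter> space M \<in> sigma_sets (space M) {X -` A \<inter> space M | A. A \<in> sets Sm}"
    using assms(2) by blast
  moreover have "Y -` b \<inter> space M \<in> sigma_sets (space M) {Y -` A \<inter> space M | A. A \<in> sets Tm}"
    using assms(3) by blast
  ultimately have "prob ((X -` a \<inter> space M) \<inter> (Y -` b \<inter> space M)) = prob (X -` a \<inter> space M) * prob (Y -` b \<inter> space M)"
    using assms(1) unfolding indep_rv_alt indep_sets2_eq by blast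
  moreover have "(X -` a \<inter> space M) \<inter> (Y -` b \<inter> space M) = X -` a \<inter> Y -` b \<inter> space M" by auto
  ultimately show ?thesis by simp
qed

lemma (in prob_space) indep_rv_compose:
  assumes ind: "indep_rv M Sm X Tm Y"
    and f: "f \<in> measurable Sm Sn" and g: "g \<in> measurable Tm Tn"
    and X': "\<And>\<omega>. \<omega> \<in> space M \<Longrightarrow> X' \<omega> = f (X \<omega>)"
    and Y': "\<And>\<omega>. \<omega> \<in> space M \<Longrightarrow> Y' \<omega> = g (Y \<omega>)"
  shows "indep_rv M Sn X' Tn Y'"
proof -
  have X: "X \<in> measurable M Sm" and Y: "Y \<in> measurable M Tm" using ind unfolding indep_rv_def by auto
  have mX': "X' \<in> measurable M Sn"
    using measurable_comp[OF X f] X' by (subst measurable_cong[where g="f o X"]) auto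
  have mY': "Y' \<in> measurable M Tn"
    using measurable_comp[OF Y g] Y' by (subst measurable_cong[where g="g o Y"]) auto
  have s1: "sigma_sets (space M) {X' -` A \<inter> space M | A. A \<in> sets Sn} \<subseteq> sigma_sets (space M) {X -` A \<inter> space M | A. A \<in> sets Sm}"
  proof (rule sigma_sets_mono, safe)
    fix A assume "A \<in> sets Sn"
    then have "f -` A \<inter> space Sm \<in> sets Sm" by (rule measurable_sets[OF f])
    moreover have "X' -` A \<inter> space M = X -` (f -` A \<inter> space Sm) \<inter> space M"
      using X' X by (auto simp: measurable_def)
    ultimately show "X' -` A \<inter> space M \<in> sigma_sets (space M) {X -` A \<inter> space M | A. A \<in> sets Sm}"
      by blast
  qed
  have s2: "sigma_sets (space M) {Y' -` A \<inter> space M | A. A \<in> sets Tn} \<subseteq> sigma_sets (space M) {Y -` A \<inter> space M | A. A \<in> sets Tm}"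
  proof (rule sigma_sets_mono, safe)
    fix A assume "A \<in> sets Tn"
    then have "g -` A \<inter> space Tm \<in> sets Tm" by (rule measurable_sets[OF g])
    moreover have "Y' -` A \<inter> space M = Y -` (g -` A \<inter> space Tm) \<inter> space M"
      using Y' Y by (auto simp: measurable_def)
    ultimately show "Y' -` A \<inter> space M \<in> sigma_sets (space M) {Y -` A \<inter> space M | A. A \<in> sets Tm}"
      by blast
  qed
  have "indep_set (sigma_sets (space M) {X' -` A \<inter> space M | A. A \<in> sets Sn}) (sigma_sets (space M) {Y' -` A \<inter> space M | A. A \<in> sets Tn})"
    unfolding indep_set_def
    by (rule indep_sets_mono_sets[OF ind[unfolded indep_rv_alt indep_set_def, THEN conjunct2, THEN conjunct2]])
      (use s1 s2 in \<open>auto split: bool.split\<close>)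
  then show ?thesis using mX' mY' unfolding indep_rv_alt by auto
qed

lemma (in prob_space) indep_var_AE:
  assumes "indep_var Sm X Tm Y" "Y' \<in> measurable M Tm" "AE x in M. Y x = Y' x"
  shows "indep_var Sm X Tm Y'"
proof -
  have X: "X \<in> measurable M Sm" and Y: "Y \<in> measurable M Tm"
    using assms(1) indep_var_rv1 indep_var_rv2 by auto
  have "distr M Tm Y = distr M Tm Y'"
    by (rule distr_cong_AE) (use assms X Y in auto)
  moreover have "distr M (Sm \<Otimes>\<^sub>M Tm) (\<lambda>x. (X x, Y x)) = distr M (Sm \<Otimes>\<^sub>M Tm) (\<lambda>x. (X x, Y' x))"
    by (rule distr_cong_AE) (use assms X Y in \<open>auto intro!: measurable_Pair\<close>)
  ultimately show ?thesis using assms(1,2) X unfolding indep_var_distribution_eq by metis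
qed

lemma (in prob_space) indep_rv_triple:
  assumes XY: "indep_rv M Sm X Tm Y" and ZXY: "indep_rv M Rm Z (Sm \<Otimes>\<^sub>M Tm) (\<lambda>\<omega>. (X \<omega>, Y \<omega>))"
  shows "indep_rv M Sm X (Tm \<Otimes>\<^sub>M Rm) (\<lambda>\<omega>. (Y \<omega>, Z \<omega>))"
proof -
  have X[measurable]: "X \<in> measurable M Sm" and Y[measurable]: "Y \<in> measurable M Tm"
    using XY unfolding indep_rv_def by auto
  have Z[measurable]: "Z \<in> measurable M Rm" using ZXY unfolding indep_rv_def by auto
  define A where "A = {X -` a \<inter> space M | a. a \<in> sets Sm}"
  define B where "B = {Y -` b \<inter> Z -` c \<inter> space M | b c. b \<in> sets Tm \<and> c \<in> sets Rm}"
  have AB: "indep_set A B"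
    unfolding indep_sets2_eq
  proof (intro conjI ballI)
    show "A \<subseteq> events" unfolding A_def by auto
    show "B \<subseteq> events" unfolding B_def by auto
    fix e1 e2 assume "e1 \<in> A" "e2 \<in> B"
    then obtain a b c where abc: "a \<in> sets Sm" "b \<in> sets Tm" "c \<in> sets Rm"
      and e: "e1 = X -` a \<inter> space M" "e2 = Y -` b \<inter> Z -` c \<inter> space M"
      unfolding A_def B_def by auto
    have 1: "prob (Z -` c \<inter> (\<lambda>x. (X x, Y x)) -` (a \<times> b) \<inter> space M) =
       prob (Z -` c \<inter> space M) * prob ((\<lambda>x. (X x, Y x)) -` (a \<times> b) \<inter> space M)"
      using indep_rvD[OF ZXY] abc by auto
    have 2: "prob (Z -` c \<inter> (\<lambda>x. (X x, Y x)) -` (space Sm \<times> b) \<inter> space M) =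
       prob (Z -` c \<inter> space M) * prob ((\<lambda>x. (X x, Y x)) -` (space Sm \<times> b) \<inter> space M)"
      using indep_rvD[OF ZXY] abc by auto
    have 3: "prob (X -` a \<inter> Y -` b \<inter> space M) = prob (X -` a \<inter> space M) * prob (Y -` b \<inter> space M)"
      using indep_rvD[OF XY] abc by auto
    have Xs: "\<And>x. x \<in> space M \<Longrightarrow> X x \<in> space Sm" using X by (auto simp: measurable_def)
    have e3: "(\<lambda>x. (X x, Y x)) -` (a \<times> b) \<inter> space M = X -` a \<inter> Y -` b \<inter> space M" by auto
    have e4: "(\<lambda>x. (X x, Y x)) -` (space Sm \<times> b) \<inter> space M = Y -` b \<inter> space M" using Xs by auto
    have e5: "Z -` c \<inter> (\<lambda>x. (X x, Y x)) -` (space Sm \<times> b) \<inter> space M = Y -` b \<inter> Z -` c \<inter> space M"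
      using Xs by auto
    have e6: "Z -` c \<inter> (\<lambda>x. (X x, Y x)) -` (a \<times> b) \<inter> space M = e1 \<inter> e2" using e by auto
    show "prob (e1 \<inter> e2) = prob e1 * prob e2"
      using 1 2 3 e3 e4 e5 e6 e by (simp add: mult_ac)
  qed
  have sA: "Int_stable A" unfolding A_def Int_stable_def
  proof (safe)
    fix a a' assume "a \<in> sets Sm" "a' \<in> sets Sm"
    then show "\<exists>a''. X -` a \<inter> space M \<inter> (X -` a' \<inter> space M) = X -` a'' \<inter> space M \<and> a'' \<in> sets Sm"
      by (intro exI[of _ "a \<inter> a'"]) auto
  qed
  have sB: "Int_stable B" unfolding B_def Int_stable_def
  proof (safe)
    fix b c b' c' assume "b \<in> sets Tm" "c \<in> sets Rm" "b' \<in> sets Tm" "c' \<in> sets Rm"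
    then show "\<exists>b'' c''. Y -` b \<inter> Z -` c \<inter> space M \<inter> (Y -` b' \<inter> Z -` c' \<inter> space M) = Y -` b'' \<inter> Z -` c'' \<inter> space M \<and> b'' \<in> sets Tm \<and> c'' \<in> sets Rm"
      by (intro exI[of _ "b \<inter> b'"] exI[of _ "c \<inter> c'"]) auto
  qed
  have ind: "indep_set (sigma_sets (space M) A) (sigma_sets (space M) B)"
    by (rule indep_set_sigma_sets[OF AB sA sB])
  have Bsub: "B \<subseteq> Pow (space M)" unfolding B_def by auto
  have Ys: "Y \<in> measurable (sigma (space M) B) Tm"
  proof (rule measurableI)
    fix x assume "x \<in> space (sigma (space M) B)" then show "Y x \<in> space Tm"
      using Y Bsub by (auto simp: measurable_def)
  next
    fix b assume "b \<in> sets Tm"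
    moreover have "Y -` b \<inter> space M = Y -` b \<inter> Z -` space Rm \<inter> space M"
      using Z by (auto simp: measurable_def)
    ultimately have "Y -` b \<inter> space M \<in> B" unfolding B_def by blast
    then show "Y -` b \<inter> space (sigma (space M) B) \<in> sets (sigma (space M) B)"
      using Bsub by auto
  qed
  have Zs: "Z \<in> measurable (sigma (space M) B) Rm"
  proof (rule measurableI)
    fix x assume "x \<in> space (sigma (space M) B)" then show "Z x \<in> space Rm"
      using Z Bsub by (auto simp: measurable_def)
  next
    fix c assume "c \<in> sets Rm"
    moreover have "Z -` c \<inter> space M = Y -` space Tm \<inter> Z -` c \<inter> space M"
      using Y by (auto simp: measurable_def)
    ultimately have "Z -` c \<inter> space M \<in> B" unfolding B_def by blast
    then show "Z -` c \<inter> space (sigma (space M) B) \<in> sets (sigma (space M) B)"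
      using Bsub by auto
  qed
  have YZs: "(\<lambda>\<omega>. (Y \<omega>, Z \<omega>)) \<in> measurable (sigma (space M) B) (Tm \<Otimes>\<^sub>M Rm)"
    using Ys Zs by (rule measurable_Pair)
  have sub: "sigma_sets (space M) {(\<lambda>\<omega>. (Y \<omega>, Z \<omega>)) -` D \<inter> space M | D. D \<in> sets (Tm \<Otimes>\<^sub>M Rm)}
      \<subseteq> sigma_sets (space M) B"
  proof (rule sigma_sets_mono, safe)
    fix D assume "D \<in> sets (Tm \<Otimes>\<^sub>M Rm)"
    from measurable_sets[OF YZs this]
    show "(\<lambda>\<omega>. (Y \<omega>, Z \<omega>)) -` D \<inter> space M \<in> sigma_sets (space M) B"
      using Bsub by auto
  qed
  have "indep_set (sigma_sets (space M) A)
     (sigma_sets (space M) {(\<lambda>\<omega>. (Y \<omega>, Z \<omega>)) -` D \<inter> space M | D. D \<in> sets (Tm \<Otimes>\<^sub>M Rm)})"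
    unfolding indep_set_def
    by (rule indep_sets_mono_sets[OF ind[unfolded indep_set_def]]) (use sub in \<open>auto split: bool.split\<close>)
  then show ?thesis unfolding indep_rv_alt A_def using X Y Z by (auto intro!: measurable_Pair)
qed



definition cb :: "nat \<Rightarrow> nat \<Rightarrow> (int \<Rightarrow> real) \<Rightarrow> nat \<Rightarrow> real" where
  "cb \<tau> j v = (\<lambda>i\<in>{..\<tau>}. v (int j - int i))"

fun sf :: "(real \<Rightarrow> real \<Rightarrow> real) \<Rightarrow> (real \<Rightarrow> real) \<Rightarrow> ((nat \<Rightarrow> real) \<Rightarrow> real) \<Rightarrow> nat \<Rightarrow> nat
   \<Rightarrow> (nat + nat \<Rightarrow> real) \<times> (int \<Rightarrow> real) \<Rightarrow> real" where
  "sf P \<pi> h \<tau> 0 w = fst w (Inl 0)"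
| "sf P \<pi> h \<tau> (Suc j) w = P (sf P \<pi> h \<tau> j w) (\<pi> (sf P \<pi> h \<tau> j w) + h (cb \<tau> j (snd w)) + fst w (Inr j))
      + fst w (Inl (Suc j))"

lemma cb_meas: "cb \<tau> j \<in> measurable (PiM UNIV (\<lambda>_. borel)) (conf_space \<tau>)"
  unfolding cb_def conf_space_def by measurable

lemma sf_meas:
  assumes meas_P: "(\<lambda>(x, y). P x y) \<in> borel_measurable borel"
    and meas_pi: "\<pi> \<in> borel_measurable borel"
    and meas_h: "h \<in> borel_measurable (conf_space \<tau>)"
  shows "j \<le> t \<Longrightarrow> sf P \<pi> h \<tau> j \<in> borel_measurable (PiM (- {Inr t}) (\<lambda>_. borel) \<Otimes>\<^sub>M PiM UNIV (\<lambda>_. borel))"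
proof (induction j)
  case 0
  then show ?case by simp
next
  case (Suc j)
  have IH: "sf P \<pi> h \<tau> j \<in> borel_measurable (PiM (- {Inr t}) (\<lambda>_. borel) \<Otimes>\<^sub>M PiM UNIV (\<lambda>_. borel))"
    using Suc by simp
  have j: "Inr j \<in> - {Inr t}" using Suc by simp
  have P2: "(\<lambda>x. P (fst x) (snd x)) \<in> borel_measurable (borel \<Otimes>\<^sub>M borel)"
    using meas_P by (simp add: borel_prod case_prod_beta')
  note [measurable] = IH meas_pi meas_h cb_meas
  have "(\<lambda>w. \<pi> (sf P \<pi> h \<tau> j w) + h (cb \<tau> j (snd w)) + fst w (Inr j)) \<in> borel_measurable (PiM (- {Inr t}) (\<lambda>_. borel) \<Otimes>\<^sub>M PiM UNIV (\<lambda>_. borel))"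
    using j by measurable
  then have "(\<lambda>w. P (sf P \<pi> h \<tau> j w) (\<pi> (sf P \<pi> h \<tau> j w) + h (cb \<tau> j (snd w)) + fst w (Inr j))) \<in> borel_measurable (PiM (- {Inr t}) (\<lambda>_. borel) \<Otimes>\<^sub>M PiM UNIV (\<lambda>_. borel))"
    using measurable_comp[OF measurable_Pair[OF IH] P2] by (simp add: o_def)
  then show ?case by simp
qed
theorem theorem1:
  fixes M :: "'a measure"
    and s a :: "nat \<Rightarrow> 'a \<Rightarrow> real"
    and u :: "int \<Rightarrow> 'a \<Rightarrow> real"
    and es ea :: "nat \<Rightarrow> 'a \<Rightarrow> real"
    and P :: "real \<Rightarrow> real \<Rightarrow> real"
    and \<pi> :: "real \<Rightarrow> real"
    and h :: "(nat \<Rightarrow> real) \<Rightarrow> real"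
    and \<tau> k t :: nat
  assumes prob: "prob_space M"
    and tau: "\<tau> \<ge> 1"
    and kt: "k < t"
    and meas_s: "\<And>j. s j \<in> borel_measurable M"
    and meas_a: "\<And>j. a j \<in> borel_measurable M"
    and meas_u: "\<And>j. u j \<in> borel_measurable M"
    and meas_es: "\<And>j. es j \<in> borel_measurable M"
    and meas_ea: "\<And>j. ea j \<in> borel_measurable M"
    and meas_P: "(\<lambda>(x, y). P x y) \<in> borel_measurable borel"
    and meas_pi: "\<pi> \<in> borel_measurable borel"
    and meas_h: "h \<in> borel_measurable (conf_space \<tau>)"
    and init: "\<And>\<omega>. \<omega> \<in> space M \<Longrightarrow> s 0 \<omega> = es 0 \<omega>"
    and eq_s: "\<And>j \<omega>. \<omega> \<in> space M \<Longrightarrow> s (Suc j) \<omega> = P (s j \<omega>) (a j \<omega>) + es (Suc j) \<omega>"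
    and eq_a: "\<And>j \<omega>. \<omega> \<in> space M \<Longrightarrow> a j \<omega> = \<pi> (s j \<omega>) + h (conf_block u \<tau> j \<omega>) + ea j \<omega>"
    and noise_indep: "prob_space.indep_vars M (\<lambda>_. borel) (case_sum es ea) UNIV"
    and noise_conf_indep: "indep_rv M
          (PiM UNIV (\<lambda>_. borel)) (\<lambda>\<omega> i. case_sum es ea i \<omega>)
          (PiM UNIV (\<lambda>_. borel)) (\<lambda>\<omega> j. u j \<omega>)"
    and int_h: "integrable M (\<lambda>\<omega>. h (conf_block u \<tau> t \<omega>))"
    and int_ea: "integrable M (ea t)"
    and dens_sk: "smooth_pos_density M (s k)"
    and dens_u: "\<And>j. smooth_pos_density M (u j)"
    and IV: "valid_IV M s u \<tau> k t"
  shows "AB_criterion M (s t) (a t) (s k)"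
proof -
  interpret prob_space M by (rule prob)
  define E where "E = (\<lambda>\<omega> i. case_sum es ea i \<omega>)"
  define NS where "NS = PiM (- {Inr t}) (\<lambda>_::nat+nat. (borel::real measure))"
  define UV where "UV = PiM (UNIV::int set) (\<lambda>_. (borel::real measure))"
  define N' where "N' = (\<lambda>\<omega>. restrict (\<lambda>i. case_sum es ea i \<omega>) (- {Inr t}))"
  define U where "U = (\<lambda>\<omega> j. u j \<omega>)"
  define CS where "CS = conf_space \<tau>"
  define conf where "conf = conf_block u \<tau> t"
  note meas_s[measurable] meas_a[measurable] meas_u[measurable] meas_es[measurable] meas_ea[measurable]
  have mE: "case_sum es ea i \<in> borel_measurable M" for i by (cases i) auto
  have mN': "N' \<in> measurable M NS" unfolding N'_def NS_def using mE by (auto intro!: measurable_restrict)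
  have mU: "U \<in> measurable M UV" unfolding U_def UV_def by (rule measurable_PiM_single') auto
  define K :: "bool \<Rightarrow> (nat + nat) set" where "K = case_bool {Inr t} (- {Inr t})"
  have "indep_vars (\<lambda>j. PiM (K j) (\<lambda>_. borel)) (\<lambda>j \<omega>. restrict (\<lambda>i. case_sum es ea i \<omega>) (K j)) UNIV"
    by (rule indep_vars_restrict[OF noise_indep]) (auto simp: K_def disjoint_family_on_def split: bool.split)
  moreover have "(\<lambda>j. PiM (K j) (\<lambda>_. borel)) = case_bool (PiM {Inr t} (\<lambda>_. borel)) NS"
    by (rule ext) (simp add: K_def NS_def split: bool.split)
  moreover have "(\<lambda>j \<omega>. restrict (\<lambda>i. case_sum es ea i \<omega>) (K j)) = case_bool (\<lambda>\<omega>. restrict (\<lambda>i. case_sum es ea i \<omega>) {Inr t}) N'"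
    by (rule ext) (simp add: K_def N'_def split: bool.split)
  ultimately have "indep_var (PiM {Inr t} (\<lambda>_. borel)) (\<lambda>\<omega>. restrict (\<lambda>i. case_sum es ea i \<omega>) {Inr t}) NS N'"
    unfolding indep_var_def by simp
  then have "indep_rv M (PiM {Inr t} (\<lambda>_. borel)) (\<lambda>\<omega>. restrict (\<lambda>i. case_sum es ea i \<omega>) {Inr t}) NS N'"
    unfolding indep_rv_var .
  then have ind1: "indep_rv M borel (ea t) NS N'"
    by (rule indep_rv_compose[where f="\<lambda>r. r (Inr t)" and g=id]) simp_all
  have "indep_rv M (borel \<Otimes>\<^sub>M NS) (\<lambda>\<omega>. (ea t \<omega>, N' \<omega>)) UV U"
  proof (rule indep_rv_compose[OF noise_conf_indep, where f="\<lambda>e. (e (Inr t), restrict e (- {Inr t}))" and g=id])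
    show "(\<lambda>e. (e (Inr t), restrict e (- {Inr t}))) \<in> measurable (PiM UNIV (\<lambda>_. borel)) (borel \<Otimes>\<^sub>M NS)"
      unfolding NS_def by measurable
    show "id \<in> measurable (PiM UNIV (\<lambda>_. borel)) UV" unfolding UV_def by simp
  qed (simp_all add: U_def N'_def)
  then have ind2: "indep_rv M borel (ea t) (NS \<Otimes>\<^sub>M UV) (\<lambda>\<omega>. (N' \<omega>, U \<omega>))"
    by (rule indep_rv_triple[OF ind1 indep_rv_sym])
  have sfeq: "s j \<omega> = sf P \<pi> h \<tau> j (N' \<omega>, U \<omega>)" if w: "\<omega> \<in> space M" and "j \<le> t" for j \<omega>
    using \<open>j \<le> t\<close>
  proof (induction j)
    case 0
    then show ?case using init[OF w] by (simp add: N'_def)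
  next
    case (Suc j)
    have "conf_block u \<tau> j \<omega> = cb \<tau> j (U \<omega>)" by (simp add: conf_block_def cb_def U_def)
    then show ?case using Suc eq_s[OF w, of j] eq_a[OF w, of j] by (simp add: N'_def)
  qed
  have G: "(\<lambda>w. (sf P \<pi> h \<tau> k w, cb \<tau> t (snd w))) \<in> measurable (NS \<Otimes>\<^sub>M UV) (borel \<Otimes>\<^sub>M CS)"
    using sf_meas[OF meas_P meas_pi meas_h, of k t] kt cb_meas[of \<tau> t]
    unfolding NS_def UV_def CS_def by (auto intro!: measurable_Pair)
  have A3: "indep_rv M (borel \<Otimes>\<^sub>M CS) (\<lambda>\<omega>. (s k \<omega>, conf \<omega>)) borel (ea t)"
    by (rule indep_rv_compose[OF indep_rv_sym[OF ind2] G measurable_ident])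
       (use sfeq kt in \<open>auto simp: conf_def conf_block_def cb_def U_def\<close>)
  have B3: "indep_rv M borel (s k) CS conf"
    using IV unfolding valid_IV_def CS_def conf_def by simp
  have ind3: "indep_rv M borel (s k) (CS \<Otimes>\<^sub>M borel) (\<lambda>\<omega>. (conf \<omega>, ea t \<omega>))"
    by (rule indep_rv_triple[OF B3 indep_rv_sym[OF A3]])
  define c where "c = (\<integral>\<omega>. h (conf \<omega>) + ea t \<omega> \<partial>M)"
  define R where "R = (\<lambda>\<omega>. h (conf \<omega>) + ea t \<omega> - c)"
  have mh: "h \<in> borel_measurable CS" using meas_h CS_def by simp
  have indR: "indep_var borel (s k) borel R"
    unfolding indep_rv_var[symmetric]
    by (rule indep_rv_compose[OF ind3 measurable_ident, where g="\<lambda>(y,z). h y + z - c"])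
       (use mh in \<open>auto simp: R_def\<close>)
  have intR: "integrable M R" unfolding R_def conf_def using int_h int_ea by auto
  have mR: "R \<in> borel_measurable M" using intR by auto
  have ER: "(\<integral>\<omega>. R \<omega> \<partial>M) = 0"
    unfolding R_def c_def using int_h int_ea conf_def by (simp add: prob_space)
  obtain l where ml: "l \<in> borel_measurable borel" and l0: "l \<noteq> (\<lambda>_. 0)"
     and lAE: "AE \<omega> in M. a t \<omega> - l (s t \<omega>) = R \<omega>"
  proof -
    have Rs: "a t \<omega> - \<pi> (s t \<omega>) - c = R \<omega>" if "\<omega> \<in> space M" for \<omega>
      using eq_a[OF that, of t] unfolding R_def conf_def by simp
    show ?thesis
    proof (cases "(\<lambda>x. \<pi> x + c) = (\<lambda>_. 0)")
      case False
      show ?thesis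
      proof (rule that[of "\<lambda>x. \<pi> x + c"])
        show "(\<lambda>x. \<pi> x + c) \<in> borel_measurable borel" using meas_pi by simp
        show "(\<lambda>x. \<pi> x + c) \<noteq> (\<lambda>_. 0)" by (rule False)
        show "AE \<omega> in M. a t \<omega> - (\<pi> (s t \<omega>) + c) = R \<omega>"
          using Rs by (intro AE_I2) (simp add: algebra_simps)
      qed
    next
      case True
      have pic: "\<pi> x = - c" for x
      proof -
        have "\<pi> x + c = 0" using fun_cong[OF True, of x] by simp
        then show ?thesis by linarith
      qed
      define D where "D = distr M borel (s t)"
      interpret D: prob_space D unfolding D_def by (rule prob_space_distr) simp
      have "countable {x. measure D {x} \<noteq> 0}" by (rule D.countable_support)
      then have "{x. measure D {x} \<noteq> 0} \<noteq> UNIV" using uncountable_UNIV_real by auto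
      then obtain x0 where x0: "measure D {x0} = 0" by auto
      have N0: "emeasure M (s t -` {x0} \<inter> space M) = 0"
        using x0 emeasure_distr[of "s t" M borel "{x0}"] D.emeasure_eq_measure unfolding D_def by simp
      show ?thesis
      proof (rule that[of "indicator {x0}"])
        show "(indicator {x0} :: real \<Rightarrow> real) \<in> borel_measurable borel" by simp
        show "(indicator {x0} :: real \<Rightarrow> real) \<noteq> (\<lambda>_. 0)"
          by (metis indicator_simps(1) singletonI zero_neq_one)
        show "AE \<omega> in M. a t \<omega> - indicator {x0} (s t \<omega>) = R \<omega>"
        proof (rule AE_I[where N="s t -` {x0} \<inter> space M"])
          show "{\<omega> \<in> space M. \<not> a t \<omega> - indicator {x0} (s t \<omega>) = R \<omega>} \<subseteq> s t -` {x0} \<inter> space M"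
          proof safe
            fix \<omega> assume w: "\<omega> \<in> space M" and ne: "a t \<omega> - indicator {x0} (s t \<omega>) \<noteq> R \<omega>"
            show "\<omega> \<in> s t -` {x0}"
            proof (rule ccontr)
              assume "\<omega> \<notin> s t -` {x0}"
              then have "indicator {x0} (s t \<omega>) = (0::real)" by simp
              then show False using ne Rs[OF w] pic[of "s t \<omega>"] by simp
            qed
          qed
        qed (use N0 in auto)
      qed
    qed
  qed
  define F where "F = vimage_algebra (space M) (s k) borel"
  have subF: "subalgebra M F" unfolding F_def subalgebra_def
    by (auto simp: sets_vimage_algebra2 measurable_def intro!: measurable_sets[OF meas_s])
  interpret FS: finite_measure_subalgebra M F by unfold_locales (rule subF)
  have condR: "AE \<omega> in M. real_cond_exp M F R \<omega> = (\<lambda>_. 0) \<omega>"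
  proof (rule FS.real_cond_exp_charact)
    fix A assume "A \<in> sets F"
    then obtain B where B: "B \<in> sets borel" and A: "A = s k -` B \<inter> space M"
      unfolding F_def by (subst (asm) sets_vimage_algebra2) (auto simp: measurable_def)
    have iB: "indep_var borel (\<lambda>x. indicator B (s k x)::real) borel R"
      using indep_var_compose[OF indR, of "indicator B" borel id borel] B by (simp add: o_def)
    have intB: "integrable M (\<lambda>x. indicator B (s k x)::real)"
      by (rule integrable_const_bound[where B=1]) (use B in auto)
    have "(\<integral>x\<in>A. R x \<partial>M) = (\<integral>x. indicator B (s k x) * R x \<partial>M)"
      unfolding set_lebesgue_integral_def A by (rule Bochner_Integration.integral_cong) (auto simp: indicator_def)
    also have "\<dots> = (\<integral>x. indicator B (s k x) \<partial>M) * (\<integral>x. R x \<partial>M)"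
      by (rule indep_var_lebesgue_integral[OF iB intB intR])
    finally show "(\<integral>x\<in>A. R x \<partial>M) = (\<integral>x\<in>A. (\<lambda>_. 0) x \<partial>M)"
      using ER by (simp add: set_lebesgue_integral_def)
  qed (use intR in auto)
  have mres: "(\<lambda>\<omega>. a t \<omega> - l (s t \<omega>)) \<in> borel_measurable M" using ml by measurable
  have "integrable M (\<lambda>\<omega>. a t \<omega> - l (s t \<omega>))"
    using integrable_cong_AE[OF mres mR lAE] intR by simp
  moreover have "AE \<omega> in M. real_cond_exp M F (\<lambda>\<omega>. a t \<omega> - l (s t \<omega>)) \<omega> = 0"
    using FS.real_cond_exp_cong[OF lAE mres mR] condR by auto
  moreover have "indep_var borel (s k) borel (\<lambda>\<omega>. a t \<omega> - l (s t \<omega>))"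
    by (rule indep_var_AE[OF indR mres]) (use lAE in auto)
  ultimately show ?thesis unfolding AB_criterion_def F_def using ml l0 by blast
qed

end
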